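(* Let $\mathcal{H}$ be a reproducing kernel Hilbert space of real-valued functions on $\mathbb{R}^p$ with positive definite reproducing kernel $K:\mathbb{R}^p\times\mathbb{R}^p\to\mathbb{R}$ and norm $\|\cdot\|_{\mathcal{H}}$. Let training data $\{(y_i,\mathbf{x}_i)\}_{i=1}^N\subset\mathbb{R}\times\mathbb{R}^p$ be given, let $\mu\ge 0$, let $s\in\{1,\dots,N\}$, and let $\lambda_0\ge 0$. For $f\in\mathcal{H}$ set $r_i(f):=y_i-f(\mathbf{x}_i)$ and let $r_{[1]}^2(f)\le\dots\le r_{[N]}^2(f)$ denote the squared residuals $r_1^2(f),\dots,r_N^2(f)$ sorted in nondecreasing order. Suppose $(\hat f,\hat{\mathbf{o}})\in\mathcal{H}\times\mathbb{R}^N$ is a minimizer of $$\min_{f\in\mathcal{H},\ \mathbf{o}\in\mathbb{R}^N}\Big[\sum_{i=1}^N (y_i-f(\mathbf{x}_i)-o_i)^2+\mu\|f\|_{\mathcal{H}}^2+\lambda_0\|\mathbf{o}\|_0\Big],$$ where $\|\mathbf{o}\|_0$ is the number of nonzero entries of $\mathbf{o}=[o_1,\dots,o_N]'$, and suppose $\lambda_0$ is such that $\|\hat{\mathbf{o}}\|_0=N-s$. Then $\hat f$ is a minimizer of the variational least-trimmed squares problem $$\min_{f\in\mathcal{H}}\Big[\sum_{i=1}^{s} r_{[i]}^2(f)+\mu\|f\|_{\mathcal{H}}^2\Big].$$ *)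

theory Defs
  imports "HOL-Analysis.Analysis"
begin

definition pd_kernel :: "(real^'p \<Rightarrow> real^'p \<Rightarrow> real) \<Rightarrow> bool" where
  "pd_kernel K \<longleftrightarrow> (\<forall>z x. K z x = K x z) \<and>
     (\<forall>(n::nat) (pts::nat \<Rightarrow> real^'p) (c::nat \<Rightarrow> real).
        (\<Sum>i<n. \<Sum>j<n. c i * c j * K (pts i) (pts j)) \<ge> 0)"

text \<open>The Hilbert space type 'h (real inner product space, complete) is a space of
  real-valued functions on R^p via the injective linear embedding ev, with reproducing
  kernel K: for each point z, K(.,z) belongs to H (as ev k_z) and f(z) = <f, k_z>.\<close>
definition rkhs :: "('h::{real_inner,complete_space} \<Rightarrow> (real^'p \<Rightarrow> real))
                     \<Rightarrow> (real^'p \<Rightarrow> real^'p \<Rightarrow> real) \<Rightarrow> bool" where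
  "rkhs ev K \<longleftrightarrow> inj ev \<and>
     (\<forall>f g x. ev (f + g) x = ev f x + ev g x) \<and>
     (\<forall>a f x. ev (a *\<^sub>R f) x = a * ev f x) \<and>
     (\<forall>z. \<exists>k. ev k = (\<lambda>x. K x z) \<and> (\<forall>f. ev f z = inner f k))"

definition resid :: "('h \<Rightarrow> (real^'p \<Rightarrow> real)) \<Rightarrow> (nat \<Rightarrow> real) \<Rightarrow> (nat \<Rightarrow> real^'p)
                     \<Rightarrow> 'h \<Rightarrow> nat \<Rightarrow> real" where
  "resid ev y x f i = y i - ev f (x i)"

definition l0norm :: "nat \<Rightarrow> (nat \<Rightarrow> real) \<Rightarrow> nat" where
  "l0norm N ov = card {i \<in> {1..N}. ov i \<noteq> 0}"

definition l0_cost :: "('h::real_normed_vector \<Rightarrow> (real^'p \<Rightarrow> real)) \<Rightarrow> nat \<Rightarrow> (nat \<Rightarrow> real)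
     \<Rightarrow> (nat \<Rightarrow> real^'p) \<Rightarrow> real \<Rightarrow> real \<Rightarrow> 'h \<Rightarrow> (nat \<Rightarrow> real) \<Rightarrow> real" where
  "l0_cost ev N y x \<mu> lam0 f ov =
     (\<Sum>i=1..N. (y i - ev f (x i) - ov i)^2) + \<mu> * (norm f)^2 + lam0 * real (l0norm N ov)"

definition sorted_sq_resid :: "('h \<Rightarrow> (real^'p \<Rightarrow> real)) \<Rightarrow> nat \<Rightarrow> (nat \<Rightarrow> real)
     \<Rightarrow> (nat \<Rightarrow> real^'p) \<Rightarrow> 'h \<Rightarrow> real list" where
  "sorted_sq_resid ev N y x f = sort (map (\<lambda>i. (resid ev y x f i)^2) [1..<N+1])"

definition lts_cost :: "('h::real_normed_vector \<Rightarrow> (real^'p \<Rightarrow> real)) \<Rightarrow> nat \<Rightarrow> (nat \<Rightarrow> real)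
     \<Rightarrow> (nat \<Rightarrow> real^'p) \<Rightarrow> real \<Rightarrow> nat \<Rightarrow> 'h \<Rightarrow> real" where
  "lts_cost ev N y x \<mu> s f =
     (\<Sum>i=1..s. sorted_sq_resid ev N y x f ! (i - 1)) + \<mu> * (norm f)^2"

end

theory Submission
  imports Defs "HOL-Library.Multiset"
begin

lemma sort_map_eq: "sort (map (a::nat\<Rightarrow>real) xs) = map a (sort_key a xs)"
  by (rule properties_for_sort) (simp_all add: mset_map)

lemma key:
  fixes a :: "nat \<Rightarrow> real"
  assumes "s \<le> N"
  shows "\<exists>U. U \<subseteq> {1..N} \<and> card U = s \<and>
     (\<Sum>i=1..s. sort (map a [1..<N+1]) ! (i-1)) = sum a U \<and>
     (\<forall>T. T \<subseteq> {1..N} \<longrightarrow> card T = s \<longrightarrow> sum a U \<le> sum a T)"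
proof -
  define ixs where "ixs = sort_key a [1..<N+1]"
  have dis: "distinct ixs" and setis: "set ixs = {1..N}" and len: "length ixs = N"
    unfolding ixs_def by auto
  define U where "U = set (take s ixs)"
  have U1: "U \<subseteq> {1..N}" unfolding U_def using setis by (metis set_take_subset)
  have cU: "card U = s" unfolding U_def using dis len assms
    by (simp add: distinct_card)
  have srt: "sorted (map a (take s ixs) @ map a (drop s ixs))"
    unfolding ixs_def by (metis append_take_drop_id map_append sorted_sort_key)
  have le: "\<forall>u\<in>U. \<forall>t\<in>set (drop s ixs). a u \<le> a t"
    using srt unfolding U_def sorted_append by auto
  have eq1: "(\<Sum>i=1..s. sort (map a [1..<N+1]) ! (i-1)) = (\<Sum>j<s. map a ixs ! j)"
  proof -
    have "(\<Sum>i=1..s. sort (map a [1..<N+1]) ! (i-1)) = (\<Sum>j<s. sort (map a [1..<N+1]) ! j)"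
      by (rule sum.reindex_bij_witness[where i="\<lambda>j. j+1" and j="\<lambda>i. i-1"]) auto
    also have "\<dots> = (\<Sum>j<s. map a ixs ! j)" unfolding ixs_def sort_map_eq by simp
    finally show ?thesis .
  qed
  also have "\<dots> = sum_list (take s (map a ixs))"
    using assms len by (simp add: sum_list_sum_nth min_def atLeast0LessThan)
  also have "\<dots> = sum a U"
    unfolding U_def take_map using dis by (simp add: sum_list_distinct_conv_sum_set)
  finally have eqU: "(\<Sum>i=1..s. sort (map a [1..<N+1]) ! (i-1)) = sum a U" .
  have opt: "sum a U \<le> sum a T" if T1: "T \<subseteq> {1..N}" and cT: "card T = s" for T
  proof -
    have fT: "finite T" using T1 finite_subset by blast
    have fU: "finite U" using U1 finite_subset by blast
    have "card (U - T) = card (T - U)"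
      using cU cT fT fU by (simp add: card_Diff_subset_Int inf_commute)
    then obtain g where g: "bij_betw g (U - T) (T - U)"
      using fT fU by (metis finite_Diff finite_same_card_bij)
    have TU: "T - U \<subseteq> set (drop s ixs)"
    proof
      fix t assume t: "t \<in> T - U"
      then have "t \<in> set ixs" using T1 setis by auto
      moreover have "set ixs = set (take s ixs) \<union> set (drop s ixs)"
        by (metis append_take_drop_id set_append)
      ultimately show "t \<in> set (drop s ixs)" using t unfolding U_def by blast
    qed
    have "sum a (U - T) \<le> sum (a \<circ> g) (U - T)"
    proof (rule sum_mono)
      fix u assume u: "u \<in> U - T"
      then have "g u \<in> T - U" using g bij_betwE by blast
      then have "g u \<in> set (drop s ixs)" using TU by blast
      then show "a u \<le> (a \<circ> g) u" using le u by simp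
    qed
    moreover have "sum (a \<circ> g) (U - T) = sum a (T - U)"
      using g sum.reindex[of g "U - T" a] unfolding bij_betw_def by simp
    moreover have "sum a U = sum a (U \<inter> T) + sum a (U - T)"
      using fU sum.Int_Diff[of U a T] by simp
    moreover have "sum a T = sum a (U \<inter> T) + sum a (T - U)"
      using fT sum.Int_Diff[of T a U] by (simp add: inf_commute)
    ultimately show ?thesis by linarith
  qed
  show ?thesis using U1 cU eqU opt by blast
qed

theorem proposition1:
  fixes ev :: "'h::{real_inner,complete_space} \<Rightarrow> (real^'p \<Rightarrow> real)"
    and K :: "real^'p \<Rightarrow> real^'p \<Rightarrow> real"
    and N s :: nat and y :: "nat \<Rightarrow> real" and x :: "nat \<Rightarrow> real^'p"
    and \<mu> lam0 :: real and fh :: 'h and oh :: "nat \<Rightarrow> real"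
  assumes "rkhs ev K" and "pd_kernel K"
    and "\<mu> \<ge> 0" and "s \<in> {1..N}" and "lam0 \<ge> 0"
    and "\<forall>f ov. l0_cost ev N y x \<mu> lam0 fh oh \<le> l0_cost ev N y x \<mu> lam0 f ov"
    and "l0norm N oh = N - s"
  shows "\<forall>f. lts_cost ev N y x \<mu> s fh \<le> lts_cost ev N y x \<mu> s f"
proof
  fix f
  have sN: "s \<le> N" using assms(4) by simp
  have lts: "lts_cost ev N y x \<mu> s g =
     (\<Sum>i=1..s. sort (map (\<lambda>i. (resid ev y x g i)^2) [1..<N+1]) ! (i-1)) + \<mu> * (norm g)^2" for g
    unfolding lts_cost_def sorted_sq_resid_def by simp
  define ah where "ah = (\<lambda>i. (resid ev y x fh i)^2)"
  define T where "T = {i\<in>{1..N}. oh i = 0}"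
  define Oh where "Oh = {i\<in>{1..N}. oh i \<noteq> 0}"
  have T1: "T \<subseteq> {1..N}" unfolding T_def by auto
  have "{1..N} = T \<union> Oh" unfolding T_def Oh_def by auto
  then have "card {1..N} = card T + card Oh"
    by (metis card_Un_disjoint finite_Un finite_atLeastAtMost T_def Oh_def disjoint_iff mem_Collect_eq)
  moreover have "card Oh = N - s" using assms(7) unfolding l0norm_def Oh_def by simp
  ultimately have cT: "card T = s" using sN by simp
  obtain Uh where Uh: "(\<Sum>i=1..s. sort (map ah [1..<N+1]) ! (i-1)) = sum ah Uh"
      "\<forall>T'. T' \<subseteq> {1..N} \<longrightarrow> card T' = s \<longrightarrow> sum ah Uh \<le> sum ah T'"
    using key[OF sN, of ah] by blast
  have "sum ah T = (\<Sum>i\<in>T. (y i - ev fh (x i) - oh i)^2)"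
    unfolding ah_def resid_def T_def by (rule sum.cong) auto
  also have "\<dots> \<le> (\<Sum>i=1..N. (y i - ev fh (x i) - oh i)^2)"
    by (rule sum_mono2) (use T1 in auto)
  finally have "sum ah T \<le> (\<Sum>i=1..N. (y i - ev fh (x i) - oh i)^2)" .
  then have A: "lts_cost ev N y x \<mu> s fh + lam0 * real (N - s) \<le> l0_cost ev N y x \<mu> lam0 fh oh"
  proof -
    have "sum ah Uh \<le> sum ah T" using Uh(2) T1 cT by blast
    then show ?thesis using \<open>sum ah T \<le> _\<close>
      unfolding lts l0_cost_def assms(7) ah_def[symmetric] Uh(1) by linarith
  qed
  define af where "af = (\<lambda>i. (resid ev y x f i)^2)"
  obtain U where U: "U \<subseteq> {1..N}" "card U = s" "(\<Sum>i=1..s. sort (map af [1..<N+1]) ! (i-1)) = sum af U"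
    using key[OF sN, of af] by blast
  define ov where "ov = (\<lambda>i. if i \<in> U then 0 else resid ev y x f i)"
  have "(\<Sum>i=1..N. (y i - ev f (x i) - ov i)^2) = (\<Sum>i=1..N. if i \<in> U then af i else 0)"
    unfolding ov_def af_def resid_def by (rule sum.cong) auto
  also have "\<dots> = sum af U"
    using U(1) by (simp add: sum.If_cases Int_absorb1)
  finally have S: "(\<Sum>i=1..N. (y i - ev f (x i) - ov i)^2) = sum af U" .
  have "l0norm N ov \<le> card ({1..N} - U)"
    unfolding l0norm_def ov_def by (rule card_mono) auto
  also have "\<dots> = N - s" using U by (simp add: card_Diff_subset finite_subset)
  finally have l0: "real (l0norm N ov) \<le> real (N - s)" by simp
  have B: "l0_cost ev N y x \<mu> lam0 f ov \<le> lts_cost ev N y x \<mu> s f + lam0 * real (N - s)"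
    unfolding l0_cost_def lts af_def[symmetric] S U(3)
    using mult_left_mono[OF l0 assms(5)] by simp
  show "lts_cost ev N y x \<mu> s fh \<le> lts_cost ev N y x \<mu> s f"
    using A B assms(6) by (meson add_le_cancel_right order_trans)
qed

end
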